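(* Let $X=\mathbb{CP}^2\#n\overline{\mathbb{CP}}^2$ with $K_0=-3H+E_1+\cdots+E_n$, let $k$ be a positive integer and $U_5=\{A\in H_2(X;\mathbb{Z}):\mathrm{ind}(A)\ge 2k,\ A\cdot H>0\}$. (1) Every $\phi\in D_{K_0}$ satisfies $\phi(U_5)=U_5$. (2) If $n\le 8$, then for every $A\in U_5$ the orbit $\{\phi(A):\phi\in D_{K_0}\}$ is a finite subset of $U_5$.
   Context: $\{H,E_1,\dots,E_n\}$ is the standard basis of $H_2(X;\mathbb{Z})$, $\mathrm{ind}(A):=A^2-K_0\cdot A$. $D_{K_0}$ is the group of automorphisms of $H_2(X)$ induced by diffeomorphisms of $X$ preserving the canonical class $K_0$; it is generated by the reflections along the classes $E_i-E_j$ and $H-E_1-E_2-E_3$ (reflection along $v$ with $v^2=-2$ being $x\mapsto x+(x\cdot v)v$). *)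

theory Defs
  imports Main
begin

text \<open>Classes in H_2(X;Z) for X = CP^2 # n (-CP^2) are encoded as integer
  coefficient functions c :: nat \<Rightarrow> int with respect to the basis
  H (index 0), E_1, ..., E_n (indices 1..n); coefficients beyond n are zero.\<close>

type_synonym hclass = "nat \<Rightarrow> int"

definition classes :: "nat \<Rightarrow> hclass set" where
  "classes n = {a. \<forall>i>n. a i = 0}"

definition iform :: "nat \<Rightarrow> hclass \<Rightarrow> hclass \<Rightarrow> int" where
  "iform n a b = a 0 * b 0 - (\<Sum>i\<in>{1..n}. a i * b i)"

definition clH :: hclass where
  "clH = (\<lambda>i. if i = 0 then 1 else 0)"

definition clE :: "nat \<Rightarrow> hclass" where
  "clE j = (\<lambda>i. if i = j then 1 else 0)"

definition K0 :: "nat \<Rightarrow> hclass" where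
  "K0 n = (\<lambda>i. if i = 0 then -3 else if i \<le> n then 1 else 0)"

definition ind :: "nat \<Rightarrow> hclass \<Rightarrow> int" where
  "ind n A = iform n A A - iform n (K0 n) A"

definition refl :: "nat \<Rightarrow> hclass \<Rightarrow> hclass \<Rightarrow> hclass" where
  "refl n v = (\<lambda>x. (\<lambda>i. x i + iform n x v * v i))"

definition gens :: "nat \<Rightarrow> hclass set" where
  "gens n = {(\<lambda>l. clE i l - clE j l) | i j. 1 \<le> i \<and> i \<le> n \<and> 1 \<le> j \<and> j \<le> n \<and> i \<noteq> j}
          \<union> {v. n \<ge> 3 \<and> v = (\<lambda>l. clH l - clE 1 l - clE 2 l - clE 3 l)}"

inductive_set DK0 :: "nat \<Rightarrow> (hclass \<Rightarrow> hclass) set" for n where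
  id_in: "id \<in> DK0 n"
| gen_in: "v \<in> gens n \<Longrightarrow> refl n v \<in> DK0 n"
| comp_in: "f \<in> DK0 n \<Longrightarrow> g \<in> DK0 n \<Longrightarrow> f \<circ> g \<in> DK0 n"
| inv_in: "f \<in> DK0 n \<Longrightarrow> inv f \<in> DK0 n"

definition U5 :: "nat \<Rightarrow> nat \<Rightarrow> hclass set" where
  "U5 n k = {A \<in> classes n. ind n A \<ge> 2 * int k \<and> iform n A clH > 0}"

end

theory Submission imports Defs "HOL-Analysis.Analysis" begin

lemma iform_sym: "iform n x y = iform n y x"
  unfolding iform_def by (simp add: mult.commute)

lemma iform_lin: "iform n (\<lambda>i. x i + c * v i) y = iform n x y + c * iform n v y"
  unfolding iform_def by (simp add: algebra_simps sum.distrib sum_distrib_left)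

lemma iform_refl1: "iform n (refl n v x) y = iform n x y + iform n x v * iform n v y"
  unfolding refl_def by (rule iform_lin)

lemma iform_refl2: "iform n y (refl n v x) = iform n y x + iform n x v * iform n y v"
  using iform_refl1[of n v x y] by (simp add: iform_sym)

lemma refl_invol: assumes "iform n v v = -2" shows "refl n v (refl n v x) = x"
proof -
  have "iform n (refl n v x) v = - iform n x v" using iform_refl1[of n v x v] assms by simp
  have "refl n v (refl n v x) = (\<lambda>i. refl n v x i + iform n (refl n v x) v * v i)"
    by (simp add: refl_def)
  with \<open>iform n (refl n v x) v = - iform n x v\<close> show ?thesis by (simp add: refl_def)
qed

lemma refl_iform: assumes "iform n v v = -2"
  shows "iform n (refl n v x) (refl n v y) = iform n x y"
  using assms by (simp add: iform_refl1 iform_refl2 iform_sym algebra_simps)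

lemma sumE: "(\<Sum>l\<in>{1..n}. x l * clE i l) = (if 1 \<le> i \<and> i \<le> n then x i else 0)"
proof -
  have "(\<Sum>l\<in>{1..n}. x l * clE i l) = (\<Sum>l\<in>{1..n}. if l = i then x l else 0)"
    by (rule sum.cong) (auto simp: clE_def)
  then show ?thesis by (simp add: sum.delta')
qed

lemma sumH: "(\<Sum>l\<in>{1..n}. x l * clH l) = 0"
  by (rule sum.neutral) (auto simp: clH_def)

lemma iform_diffE: assumes "1 \<le> i" "i \<le> n" "1 \<le> j" "j \<le> n" "i \<noteq> j"
  shows "iform n x (\<lambda>l. clE i l - clE j l) = x j - x i"
proof -
  have "(\<Sum>l\<in>{1..n}. x l * (clE i l - clE j l)) = (\<Sum>l\<in>{1..n}. x l * clE i l) - (\<Sum>l\<in>{1..n}. x l * clE j l)"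
    by (simp add: algebra_simps sum_subtractf)
  also have "\<dots> = x i - x j" using assms by (simp only: sumE) simp
  finally show ?thesis using assms unfolding iform_def by (simp add: clE_def)
qed

lemma iform_crem: assumes "n \<ge> 3"
  shows "iform n x (\<lambda>l. clH l - clE 1 l - clE 2 l - clE 3 l) = x 0 + x 1 + x 2 + x 3"
proof -
  have "(\<Sum>l\<in>{1..n}. x l * (clH l - clE 1 l - clE 2 l - clE 3 l)) =
    (\<Sum>l\<in>{1..n}. x l * clH l) - (\<Sum>l\<in>{1..n}. x l * clE 1 l) - (\<Sum>l\<in>{1..n}. x l * clE 2 l) - (\<Sum>l\<in>{1..n}. x l * clE 3 l)"
    by (simp add: right_diff_distrib sum_subtractf)
  also have "\<dots> = - x 1 - x 2 - x 3" using assms by (simp only: sumE sumH) simp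
  finally show ?thesis unfolding iform_def by (simp add: clE_def clH_def)
qed

lemma iform_H: "iform n x clH = x 0"
  unfolding iform_def clH_def by simp

lemma iform_K0: "iform n (K0 n) x = -3 * x 0 - (\<Sum>l\<in>{1..n}. x l)"
  unfolding iform_def K0_def by simp

lemma ind_expand: "ind n x = x 0 * x 0 + 3 * x 0 - (\<Sum>l\<in>{1..n}. x l * x l - x l)"
  unfolding ind_def iform_K0 by (simp add: iform_def sum_subtractf)

lemma crem_arith:
  fixes a c1 c2 c3 :: int
  assumes "a > 0" "a * a + 3 * a - 2 \<ge> (c1*c1 - c1) + (c2*c2 - c2) + (c3*c3 - c3)"
  shows "2 * a + c1 + c2 + c3 > 0"
proof (rule ccontr)
  assume "\<not> ?thesis"
  then have S: "-(c1+c2+c3) \<ge> 2*a" by simp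
  define S where "S = -(c1+c2+c3)"
  have "0 \<le> (c1-c2)*(c1-c2) + (c2-c3)*(c2-c3) + (c1-c3)*(c1-c3)" by simp
  then have h1: "3*(c1*c1+c2*c2+c3*c3) \<ge> S*S" unfolding S_def by (simp add: algebra_simps)
  have "0 \<le> (S - 2*a) * (S + 2*a)" using S assms(1) unfolding S_def by simp
  then have h2: "S*S \<ge> 4*a*a" by (simp add: algebra_simps)
  have h3: "0 \<le> (2*a-3)*(2*a-3)" by simp
  show False using h1 h2 h3 assms(2) S unfolding S_def by (simp add: algebra_simps)
qed

lemma crem_pos:
  assumes "n \<ge> 3" "ind n x \<ge> 2" "x 0 > 0"
  shows "x 0 + (x 0 + x 1 + x 2 + x 3) > 0"
proof -
  have nn: "\<And>l. 0 \<le> x l * x l - x l"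
  proof -
    fix l
    have "0 \<le> x l * (x l - 1)"
      by (cases "x l \<ge> 1") (auto intro: mult_nonneg_nonneg mult_nonpos_nonpos)
    then show "0 \<le> x l * x l - x l" by (simp add: algebra_simps)
  qed
  have sub: "{1,2,3} \<subseteq> {1..n}" using assms(1) by auto
  have "(\<Sum>l\<in>{1,2,3}. x l * x l - x l) \<le> (\<Sum>l\<in>{1..n}. x l * x l - x l)"
    by (rule sum_mono2[OF _ sub]) (use nn in auto)
  then have "(x 1*x 1 - x 1) + (x 2*x 2 - x 2) + (x 3*x 3 - x 3) \<le> (\<Sum>l\<in>{1..n}. x l * x l - x l)"
    by simp
  with assms(2) have "x 0 * x 0 + 3 * x 0 - 2 \<ge> (x 1*x 1 - x 1) + (x 2*x 2 - x 2) + (x 3*x 3 - x 3)"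
    unfolding ind_expand by linarith
  from crem_arith[OF assms(3) this] show ?thesis by simp
qed

lemma gen_facts:
  assumes "v \<in> gens n"
  shows "iform n v v = -2 \<and> iform n (K0 n) v = 0 \<and> (\<forall>i>n. v i = 0)
     \<and> (\<forall>x. ind n x \<ge> 2 \<longrightarrow> x 0 > 0 \<longrightarrow> refl n v x 0 > 0)"
  using assms unfolding gens_def
proof (elim UnE CollectE exE conjE)
  fix i j assume v: "v = (\<lambda>l. clE i l - clE j l)" and ij: "1 \<le> i" "i \<le> n" "1 \<le> j" "j \<le> n" "i \<noteq> j"
  have a: "iform n v v = v j - v i" "iform n (K0 n) v = K0 n j - K0 n i"
    unfolding v by (rule iform_diffE[OF ij])+
  show ?thesis using ij unfolding a unfolding v
    by (auto simp: clE_def K0_def refl_def)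
next
  assume v: "v = (\<lambda>l. clH l - clE 1 l - clE 2 l - clE 3 l)" and n: "n \<ge> 3"
  have r0: "\<And>x. refl n v x 0 = x 0 + (x 0 + x 1 + x 2 + x 3)"
    unfolding v refl_def iform_crem[OF n] by (simp add: clE_def clH_def)
  have "\<forall>x. ind n x \<ge> 2 \<longrightarrow> x 0 > 0 \<longrightarrow> refl n v x 0 > 0"
    using crem_pos[OF n] unfolding r0 by blast
  moreover have a: "iform n v v = v 0 + v 1 + v 2 + v 3" "iform n (K0 n) v = K0 n 0 + K0 n 1 + K0 n 2 + K0 n 3"
    unfolding v by (rule iform_crem[OF n])+
  ultimately show ?thesis using n unfolding a unfolding v
    by (auto simp: clE_def clH_def K0_def)
qed

definition Pinv :: "nat \<Rightarrow> nat \<Rightarrow> (hclass \<Rightarrow> hclass) \<Rightarrow> bool" where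
  "Pinv n k f \<longleftrightarrow> bij f \<and> f ` U5 n k = U5 n k \<and>
     (\<forall>x. iform n (f x) (f x) = iform n x x \<and> iform n (K0 n) (f x) = iform n (K0 n) x)"

lemma refl_U5:
  assumes "v \<in> gens n" "k > 0" "x \<in> U5 n k"
  shows "refl n v x \<in> U5 n k"
proof -
  note g = gen_facts[OF assms(1)]
  have ind: "ind n (refl n v x) = ind n x"
  proof -
    have "iform n (refl n v x) (refl n v x) = iform n x x" by (rule refl_iform) (use g in simp)
    moreover have "iform n (K0 n) (refl n v x) = iform n (K0 n) x"
      using g by (simp add: iform_refl2)
    ultimately show ?thesis unfolding ind_def by simp
  qed
  have "\<forall>i>n. refl n v x i = 0" using g assms(3) by (auto simp: refl_def U5_def classes_def)
  moreover have "refl n v x 0 > 0"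
    using g assms by (auto simp: U5_def iform_H)
  ultimately show ?thesis using ind assms(3) by (auto simp: U5_def classes_def iform_H)
qed

lemma DK0_Pinv:
  assumes "f \<in> DK0 n" "k > 0"
  shows "Pinv n k f"
  using assms(1)
proof induction
  case id_in
  show ?case unfolding Pinv_def by (simp only: bij_id image_id id_apply) simp
next
  case (gen_in v)
  note g = gen_facts[OF gen_in]
  have inv: "\<And>x. refl n v (refl n v x) = x" using g refl_invol by blast
  have "bij (refl n v)" by (rule o_bij[of "refl n v"]) (auto simp: inv)
  moreover have "refl n v ` U5 n k = U5 n k"
  proof
    show "refl n v ` U5 n k \<subseteq> U5 n k" using refl_U5[OF gen_in assms(2)] by auto
    show "U5 n k \<subseteq> refl n v ` U5 n k"
    proof
      fix x assume "x \<in> U5 n k"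
      then show "x \<in> refl n v ` U5 n k" using refl_U5[OF gen_in assms(2)] inv
        by (metis image_eqI)
    qed
  qed
  moreover have "\<And>x. iform n (refl n v x) (refl n v x) = iform n x x"
    by (rule refl_iform) (use g in simp)
  ultimately show ?case using g by (simp add: Pinv_def iform_refl2)
next
  case (comp_in f g)
  then have "bij f" "bij g" "f ` U5 n k = U5 n k" "g ` U5 n k = U5 n k" by (auto simp: Pinv_def)
  then have "bij (f \<circ> g)" "(f \<circ> g) ` U5 n k = U5 n k" by (simp add: bij_comp, metis image_comp)
  then show ?case using comp_in unfolding Pinv_def comp_apply by (simp add: comp_def)
next
  case (inv_in f)
  then have b: "bij f" and im: "f ` U5 n k = U5 n k"
    and fx: "\<And>x. iform n (f x) (f x) = iform n x x \<and> iform n (K0 n) (f x) = iform n (K0 n) x"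
    by (auto simp: Pinv_def)
  have "inv f ` U5 n k = U5 n k"
    by (metis im b bij_is_inj image_inv_f_f)
  moreover have "\<And>x. iform n (inv f x) (inv f x) = iform n x x \<and> iform n (K0 n) (inv f x) = iform n (K0 n) x"
    using fx[of "inv f _"] b by (simp add: bij_is_surj surj_f_inv_f)
  ultimately show ?case using b by (simp add: Pinv_def bij_imp_bij_inv)
qed

lemma cs_int:
  fixes c :: "nat \<Rightarrow> int"
  shows "(\<Sum>l\<in>I. c l)^2 \<le> (\<Sum>l\<in>I. c l * c l) * int (card I)"
proof -
  have "(\<Sum>i\<in>I. real_of_int (c i))\<^sup>2 \<le> (\<Sum>y\<in>I. (real_of_int (c y))\<^sup>2) * card I"
    by (rule sum_squared_le_sum_of_squares)
  then have "real_of_int ((\<Sum>l\<in>I. c l)^2) \<le> real_of_int ((\<Sum>l\<in>I. c l * c l) * int (card I))"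
    by (simp add: power2_eq_square)
  then show ?thesis by linarith
qed

lemma abs_le_sq: "\<bar>t::int\<bar> \<le> t * t"
proof (cases "t = 0")
  case False
  then have "1 \<le> \<bar>t\<bar>" by simp
  then have "\<bar>t\<bar> * 1 \<le> \<bar>t\<bar> * \<bar>t\<bar>" by (intro mult_left_mono) auto
  then show ?thesis by (simp add: abs_mult[symmetric])
qed simp

lemma bound:
  assumes "n \<le> 8" "B \<in> classes n" "iform n B B = q" "iform n (K0 n) B = m"
  defines "R \<equiv> 3 * \<bar>m\<bar> + 8 * m * m + 8 * \<bar>q\<bar>"
  shows "\<bar>B i\<bar> \<le> R * R + \<bar>q\<bar>"
proof -
  define a where "a = B 0"
  define sc where "sc = (\<Sum>l\<in>{1..n}. B l)"
  define sq where "sq = (\<Sum>l\<in>{1..n}. B l * B l)"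
  have q: "q = a * a - sq" using assms(3) unfolding iform_def a_def sq_def by simp
  have m: "m = -3 * a - sc" using assms(4) unfolding iform_K0 a_def sc_def by simp
  have sqnn: "0 \<le> sq" unfolding sq_def by (auto intro: sum_nonneg)
  have "sc^2 \<le> sq * int n" using cs_int[of B "{1..n}"] unfolding sc_def sq_def by simp
  also have "\<dots> \<le> sq * 8" using sqnn assms(1) by (intro mult_left_mono) auto
  finally have cs: "sc * sc \<le> 8 * sq" by (simp add: power2_eq_square)
  have "(a + 3*m) * (a + 3*m) \<le> 8*m*m - 8*q"
    using cs unfolding q m by (simp add: algebra_simps)
  with abs_le_sq[of "a + 3*m"] have "\<bar>a + 3*m\<bar> \<le> 8*m*m - 8*q" by linarith
  then have aR: "\<bar>a\<bar> \<le> R" unfolding R_def by linarith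
  then have "\<bar>a\<bar> * \<bar>a\<bar> \<le> R * R" by (intro mult_mono) auto
  then have aR2: "a * a \<le> R * R" by (simp add: abs_mult[symmetric])
  have R0: "0 \<le> R" using aR by linarith
  show ?thesis
  proof (cases "i = 0")
    case True
    have "R \<le> R * R" using abs_le_sq[of R] R0 by simp
    then show ?thesis using aR True a_def by simp
  next
    case False
    show ?thesis
    proof (cases "i \<le> n")
      case True
      with False have "i \<in> {1..n}" by auto
      then have "B i * B i \<le> sq" unfolding sq_def
        by (intro member_le_sum) auto
      then show ?thesis using abs_le_sq[of "B i"] aR2 q by linarith
    next
      case False
      then show ?thesis using assms(2) by (simp add: classes_def)
    qed
  qed
qed

lemma finite_box: "finite {B :: hclass. (\<forall>i>n. B i = 0) \<and> (\<forall>i. \<bar>B i\<bar> \<le> M)}"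
proof -
  have "{B :: hclass. (\<forall>i>n. B i = 0) \<and> (\<forall>i. \<bar>B i\<bar> \<le> M)} \<subseteq>
        (\<lambda>xs i. if i \<le> n then xs ! i else 0) ` {xs. set xs \<subseteq> {-M..M} \<and> length xs = Suc n}"
  proof
    fix B :: hclass assume B: "B \<in> {B. (\<forall>i>n. B i = 0) \<and> (\<forall>i. \<bar>B i\<bar> \<le> M)}"
    have "B = (\<lambda>i. if i \<le> n then map B [0..<Suc n] ! i else 0)"
      using B by (auto simp: fun_eq_iff simp del: upt_Suc)
    moreover have "map B [0..<Suc n] \<in> {xs. set xs \<subseteq> {-M..M} \<and> length xs = Suc n}"
    proof -
      have "\<And>i. B i \<in> {-M..M}" using B by (auto simp: abs_le_iff) (metis abs_le_iff minus_le_iff)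
      then show ?thesis by auto
    qed
    ultimately show "B \<in> (\<lambda>xs i. if i \<le> n then xs ! i else 0) ` {xs. set xs \<subseteq> {-M..M} \<and> length xs = Suc n}"
      by (rule image_eqI)
  qed
  moreover have "finite {xs. set xs \<subseteq> {-M..M} \<and> length xs = Suc n}"
    by (rule finite_lists_length_eq) simp
  ultimately show ?thesis by (rule finite_subset[OF _ finite_imageI])
qed

theorem lemma4p2:
  fixes n k :: nat
  assumes "k > 0"
  shows "(\<forall>\<phi>\<in>DK0 n. \<phi> ` U5 n k = U5 n k)
       \<and> (n \<le> 8 \<longrightarrow> (\<forall>A\<in>U5 n k. finite {\<phi> A | \<phi>. \<phi> \<in> DK0 n}
                                     \<and> {\<phi> A | \<phi>. \<phi> \<in> DK0 n} \<subseteq> U5 n k))"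
proof (intro conjI ballI impI)
  fix \<phi> assume "\<phi> \<in> DK0 n"
  then show "\<phi> ` U5 n k = U5 n k" using DK0_Pinv[OF _ assms] by (simp add: Pinv_def)
next
  fix A assume n: "n \<le> 8" and A: "A \<in> U5 n k"
  show sub: "{\<phi> A | \<phi>. \<phi> \<in> DK0 n} \<subseteq> U5 n k"
    using DK0_Pinv[OF _ assms] A by (auto simp: Pinv_def)
  define q where "q = iform n A A"
  define m where "m = iform n (K0 n) A"
  define R where "R = 3 * \<bar>m\<bar> + 8 * m * m + 8 * \<bar>q\<bar>"
  have "{\<phi> A | \<phi>. \<phi> \<in> DK0 n} \<subseteq> {B :: hclass. (\<forall>i>n. B i = 0) \<and> (\<forall>i. \<bar>B i\<bar> \<le> R * R + \<bar>q\<bar>)}"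
  proof
    fix B assume "B \<in> {\<phi> A | \<phi>. \<phi> \<in> DK0 n}"
    then obtain \<phi> where B: "B = \<phi> A" "\<phi> \<in> DK0 n" by blast
    have P: "Pinv n k \<phi>" by (rule DK0_Pinv[OF B(2) assms])
    have Bc: "B \<in> classes n" using P A B by (auto simp: Pinv_def U5_def)
    have "iform n B B = q" "iform n (K0 n) B = m" using P B unfolding q_def m_def Pinv_def by auto
    then have "\<forall>i. \<bar>B i\<bar> \<le> R * R + \<bar>q\<bar>" using bound[OF n Bc] unfolding R_def by blast
    then show "B \<in> {B :: hclass. (\<forall>i>n. B i = 0) \<and> (\<forall>i. \<bar>B i\<bar> \<le> R * R + \<bar>q\<bar>)}"
      using Bc by (simp add: classes_def)
  qed
  then show "finite {\<phi> A | \<phi>. \<phi> \<in> DK0 n}" using finite_box finite_subset by blast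
qed

end
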